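(* Let $x^k\in\mathbb R^\ell$, let $\rho\in S_n$ be a permutation, and let $Q_1=(q_1,\dots,q_m)\in\mathbb R^{n\times m}$, $Q_2$, $\Lambda_1,\Lambda_2$ and $Z^k$ be as follows: $A(x^k)=(Q_1\;Q_2)\operatorname{diag}(\Lambda_1,\Lambda_2)(Q_1\;Q_2)^T$ with $(Q_1\;Q_2)$ orthogonal, $\Lambda_1=\operatorname{diag}(\lambda_{\rho_1}(x^k),\dots,\lambda_{\rho_m}(x^k))$, $\Lambda_2=\operatorname{diag}(\lambda_{\rho_{m+1}}(x^k),\dots,\lambda_{\rho_n}(x^k))$, and $Z^k=(Q_1\;Q_2)\operatorname{diag}(\Lambda^*,\Lambda_2)(Q_1\;Q_2)^T$ with $\Lambda^*=\operatorname{diag}(\lambda_1^*,\dots,\lambda_m^* )$. Let $x^{k+1}\in\mathbb R^\ell$ be the solution of the linear system $Bx^{k+1}=c$, where $c\in\mathbb R^\ell$ has entries $c_j=\langle Z^k-A_0,A_j\rangle_F$ (equivalently, $A(x^{k+1})$ is the point of the affine family $\{A(x):x\in\mathbb R^\ell\}$ closest to $Z^k$ in Frobenius norm). Then $$x^{k+1}=x^k-B^{-1}J_r(x^k)^T r(x^k,\rho)=x^k-B^{-1}\nabla F(x^k).$$ Consequently the Lift and Projection iteration ($x^k\mapsto$ lift to $Z^k$, then project) and the iteration $x^{k+1}=x^k-B^{-1}\nabla F(x^k)$ produce the same sequence of iterates from the same starting point (with the same choice of permutations).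
   Context: $A(x)=A_0+\sum_{i=1}^\ell x_iA_i$ for $x\in\mathbb R^\ell$, where $A_0,\dots,A_\ell\in\mathbb R^{n\times n}$ are linearly independent real symmetric matrices; $\lambda_1(x)\le\dots\le\lambda_n(x)$ are its eigenvalues. Given real numbers $\lambda_1^*\le\dots\le\lambda_m^*$ ($m\le n$) and $\rho\in S_n$: $r(x,\rho)\in\mathbb R^m$, $r_i=\lambda_{\rho_i}(x)-\lambda_i^*$; $F(x)=\frac12\|r(x,\rho)\|_2^2$. $\langle X,Y\rangle_F=\operatorname{Tr}(X^TY)$ is the Frobenius inner product. $B\in\mathbb R^{\ell\times\ell}$ is the Gram matrix $B_{ij}=\langle A_i,A_j\rangle_F$, $1\le i,j\le\ell$. $J_r(x)\in\mathbb R^{m\times\ell}$ is the matrix with entries $(J_r)_{ij}=q_i^TA_jq_i$, where $q_i$ is the unit eigenvector of $A(x)$ for $\lambda_{\rho_i}(x)$ (the $i$-th column of $Q_1$), and $\nabla F(x)=J_r(x)^Tr(x,\rho)$. *)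

theory Defs
  imports "Jordan_Normal_Form.Jordan_Normal_Form" "Jordan_Normal_Form.Gauss_Jordan_Elimination"
    "HOL-Library.Multiset"
begin

(* All indices are 0-based: matrices are n x n JNF matrices, the coefficient
   matrices A_1..A_l are  As 0, ..., As (l-1), and x :: real vec has dimension l. *)

definition affine_mat :: "nat \<Rightarrow> real mat \<Rightarrow> (nat \<Rightarrow> real mat) \<Rightarrow> nat \<Rightarrow> real vec \<Rightarrow> real mat" where
  "affine_mat n A0 As l x = mat n n (\<lambda>(i,j). A0 $$ (i,j) + (\<Sum>t<l. x $ t * As t $$ (i,j)))"

definition frob :: "real mat \<Rightarrow> real mat \<Rightarrow> real" where
  "frob X Y = (\<Sum>i<dim_row X. \<Sum>j<dim_col X. X $$ (i,j) * Y $$ (i,j))"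

definition gram :: "(nat \<Rightarrow> real mat) \<Rightarrow> nat \<Rightarrow> real mat" where
  "gram As l = mat l l (\<lambda>(i,j). frob (As i) (As j))"

(* linear independence of A_0, A_1, ..., A_l (coefficient c 0 for A_0, c (t+1) for As t) *)
definition lin_indep_mats :: "nat \<Rightarrow> real mat \<Rightarrow> (nat \<Rightarrow> real mat) \<Rightarrow> nat \<Rightarrow> bool" where
  "lin_indep_mats n A0 As l \<longleftrightarrow>
     (\<forall>c :: nat \<Rightarrow> real.
        (\<forall>i<n. \<forall>j<n. c 0 * A0 $$ (i,j) + (\<Sum>t<l. c (Suc t) * As t $$ (i,j)) = 0)
        \<longrightarrow> (\<forall>i\<le>l. c i = 0))"

definition symmetric_mat :: "real mat \<Rightarrow> bool" where
  "symmetric_mat M \<longleftrightarrow> transpose_mat M = M"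

(* eigenvalues (with multiplicity) in nondecreasing order; eig M 0 \<le> eig M 1 \<le> ... ;
   eig M i is lambda_{i+1} in the paper's 1-based notation *)
definition eig :: "real mat \<Rightarrow> nat \<Rightarrow> real" where
  "eig M i = sorted_list_of_multiset (proots (char_poly M)) ! i"

end

theory Submission imports Defs begin

lemma swap4: "(\<Sum>s<(l::nat). \<Sum>t<l. \<Sum>i<(n::nat). \<Sum>j<n. (g s t i j :: real))
   = (\<Sum>i<n. \<Sum>j<n. \<Sum>s<l. \<Sum>t<l. g s t i j)"
proof -
  have "(\<Sum>s<l. \<Sum>t<l. \<Sum>i<n. \<Sum>j<n. g s t i j) = (\<Sum>s<l. \<Sum>i<n. \<Sum>j<n. \<Sum>t<l. g s t i j)"
  proof (rule sum.cong[OF refl])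
    fix s
    have "(\<Sum>t<l. \<Sum>i<n. \<Sum>j<n. g s t i j) = (\<Sum>i<n. \<Sum>t<l. \<Sum>j<n. g s t i j)"
      by (rule sum.swap)
    also have "\<dots> = (\<Sum>i<n. \<Sum>j<n. \<Sum>t<l. g s t i j)"
      by (rule sum.cong[OF refl], rule sum.swap)
    finally show "(\<Sum>t<l. \<Sum>i<n. \<Sum>j<n. g s t i j) = (\<Sum>i<n. \<Sum>j<n. \<Sum>t<l. g s t i j)" .
  qed
  also have "\<dots> = (\<Sum>i<n. \<Sum>s<l. \<Sum>j<n. \<Sum>t<l. g s t i j)" by (rule sum.swap)
  also have "\<dots> = (\<Sum>i<n. \<Sum>j<n. \<Sum>s<l. \<Sum>t<l. g s t i j)"
    by (rule sum.cong[OF refl], rule sum.swap)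
  finally show ?thesis .
qed

lemma sq_sum: "(\<Sum>s<l. \<Sum>t<l. (a s :: real) * a t) = (\<Sum>s<l. a s)^2"
  by (simp add: power2_eq_square sum_product)

lemma sumsq0: "(\<Sum>i<(n::nat). \<Sum>j<(m::nat). ((S i j)::real)^2) = 0 \<Longrightarrow> \<forall>i<n. \<forall>j<m. S i j = 0"
proof (intro allI impI)
  fix i j assume h: "(\<Sum>i<(n::nat). \<Sum>j<m. ((S i j)::real)^2) = 0" and i: "i < n" and j: "j < m"
  have "(\<Sum>j<m. (S i j)^2) = 0"
    using h i by (subst (asm) sum_nonneg_eq_0_iff) (auto intro: sum_nonneg)
  hence "(S i j)^2 = 0" using j by (subst (asm) sum_nonneg_eq_0_iff) auto
  thus "S i j = 0" by simp
qed

lemma swap3: "(\<Sum>a<(n::nat). \<Sum>b<n. \<Sum>t<(l::nat). (f t a b :: real)) = (\<Sum>t<l. \<Sum>a<n. \<Sum>b<n. f t a b)"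
proof -
  have "(\<Sum>a<n. \<Sum>b<n. \<Sum>t<l. f t a b) = (\<Sum>a<n. \<Sum>t<l. \<Sum>b<n. f t a b)"
    by (rule sum.cong[OF refl], rule sum.swap)
  also have "\<dots> = (\<Sum>t<l. \<Sum>a<n. \<Sum>b<n. f t a b)" by (rule sum.swap)
  finally show ?thesis .
qed

lemma QDQ_entry:
  assumes Q: "Q \<in> carrier_mat n n" and i: "i < n" and j: "j < n"
  shows "(Q * mat_diag n f * transpose_mat Q) $$ (i,j) = (\<Sum>k<n. Q $$ (i,k) * f k * Q $$ (j,k))"
proof -
  have "Q * mat_diag n f = mat n n (\<lambda>(i,j). Q $$ (i,j) * f j)"
    using mat_diag_mult_right[OF Q] by simp
  then show ?thesis using Q i j
    by (simp add: scalar_prod_def lessThan_atLeast0)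
qed

lemma gram_invertible:
  assumes As: "\<And>t. t < l \<Longrightarrow> As t \<in> carrier_mat n n"
    and li: "lin_indep_mats n A0 As l"
  shows "\<exists>Bi. mat_inverse (gram As l) = Some Bi \<and> Bi * gram As l = 1\<^sub>m l \<and> Bi \<in> carrier_mat l l"
proof (cases "mat_inverse (gram As l)")
  case (Some Bi)
  then show ?thesis using mat_inverse(2)[of "gram As l" l Bi] by (auto simp: gram_def)
next
  case None
  have G: "gram As l \<in> carrier_mat l l" by (simp add: gram_def)
  from mat_inverse(1)[OF G None, of "()"] det_non_zero_imp_unit[OF G, of "()"]
  have "det (gram As l) = 0" by auto
  then obtain v where v: "v \<in> carrier_vec l" "v \<noteq> 0\<^sub>v l" "gram As l *\<^sub>v v = 0\<^sub>v l"
    using det_0_iff_vec_prod_zero_field[OF G] by auto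
  define S where "S i j = (\<Sum>t<l. v $ t * As t $$ (i,j))" for i j
  have "v \<bullet> (gram As l *\<^sub>v v) = 0" using v by simp
  moreover have "v \<bullet> (gram As l *\<^sub>v v) = (\<Sum>i<n. \<Sum>j<n. (S i j)^2)"
  proof -
    have c: "(gram As l *\<^sub>v v) $ s = (\<Sum>t<l. frob (As s) (As t) * v $ t)" if "s < l" for s
      using v(1) that by (simp add: gram_def scalar_prod_def lessThan_atLeast0 mult_ac)
    have "v \<bullet> (gram As l *\<^sub>v v) = (\<Sum>s<l. v $ s * (gram As l *\<^sub>v v) $ s)"
      using v(1) by (simp add: scalar_prod_def lessThan_atLeast0 gram_def)
    also have "\<dots> = (\<Sum>s<l. v $ s * (\<Sum>t<l. frob (As s) (As t) * v $ t))"
      using c by simp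
    also have "\<dots> = (\<Sum>s<l. \<Sum>t<l. \<Sum>i<n. \<Sum>j<n. (v $ s * As s $$ (i,j)) * (v $ t * As t $$ (i,j)))"
    proof (rule sum.cong[OF refl])
      fix s assume s: "s \<in> {..<l}"
      show "v $ s * (\<Sum>t<l. frob (As s) (As t) * v $ t) = (\<Sum>t<l. \<Sum>i<n. \<Sum>j<n. (v $ s * As s $$ (i,j)) * (v $ t * As t $$ (i,j)))"
        unfolding sum_distrib_left
      proof (rule sum.cong[OF refl])
        fix t assume t: "t \<in> {..<l}"
        have F: "frob (As s) (As t) = (\<Sum>i<n. \<Sum>j<n. As s $$ (i,j) * As t $$ (i,j))"
          using As[of s] s by (simp add: frob_def)
        have "v $ s * (frob (As s) (As t) * v $ t) = (v $ s * v $ t) * frob (As s) (As t)"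
          by (simp only: mult_ac)
        also have "\<dots> = (\<Sum>i<n. \<Sum>j<n. (v $ s * v $ t) * (As s $$ (i,j) * As t $$ (i,j)))"
          unfolding F sum_distrib_left ..
        also have "\<dots> = (\<Sum>i<n. \<Sum>j<n. (v $ s * As s $$ (i,j)) * (v $ t * As t $$ (i,j)))"
          by (intro sum.cong refl) (simp only: mult_ac)
        finally show "v $ s * (frob (As s) (As t) * v $ t) = (\<Sum>i<n. \<Sum>j<n. (v $ s * As s $$ (i,j)) * (v $ t * As t $$ (i,j)))" .
      qed
    qed
    also have "\<dots> = (\<Sum>i<n. \<Sum>j<n. \<Sum>s<l. \<Sum>t<l. (v $ s * As s $$ (i,j)) * (v $ t * As t $$ (i,j)))"
      by (rule swap4)
    also have "\<dots> = (\<Sum>i<n. \<Sum>j<n. (S i j)^2)"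
      unfolding S_def by (intro sum.cong refl) (rule sq_sum)
    finally show ?thesis .
  qed
  ultimately have "(\<Sum>i<n. \<Sum>j<n. (S i j)^2) = 0" by simp
  hence Z: "\<forall>i<n. \<forall>j<n. S i j = 0" by (rule sumsq0)
  define c where "c k = (if k = 0 then 0 else v $ (k - 1))" for k
  have "\<forall>i\<le>l. c i = 0"
    using li[unfolded lin_indep_mats_def, rule_format, of c] Z by (simp add: c_def S_def)
  hence "\<And>t. t < l \<Longrightarrow> v $ t = 0"
    by (metis Suc_leI c_def diff_Suc_1 nat.simps(3))
  hence "v = 0\<^sub>v l" using v(1) by (intro eq_vecI) auto
  with v show ?thesis by simp
qed

theorem mainTheorem2:
  fixes n m l :: nat
    and A0 :: "real mat" and As :: "nat \<Rightarrow> real mat"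
    and lamstar :: "nat \<Rightarrow> real" and \<rho> :: "nat \<Rightarrow> nat"
    and xk xk1 :: "real vec" and Q :: "real mat"
  assumes "m \<le> n"
    and "A0 \<in> carrier_mat n n" and "symmetric_mat A0"
    and "\<And>t. t < l \<Longrightarrow> As t \<in> carrier_mat n n \<and> symmetric_mat (As t)"
    and "lin_indep_mats n A0 As l"
    and "\<And>i j. i \<le> j \<Longrightarrow> j < m \<Longrightarrow> lamstar i \<le> lamstar j"
    and "\<rho> permutes {..<n}"
    and "xk \<in> carrier_vec l"
    and "Q \<in> carrier_mat n n" and "transpose_mat Q * Q = 1\<^sub>m n"
    and "affine_mat n A0 As l xk
           = Q * mat_diag n (\<lambda>i. eig (affine_mat n A0 As l xk) (\<rho> i)) * transpose_mat Q"
    and "xk1 \<in> carrier_vec l"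
    and "gram As l *\<^sub>v xk1 =
           vec l (\<lambda>j. frob
             (Q * mat_diag n (\<lambda>i. if i < m then lamstar i
                                   else eig (affine_mat n A0 As l xk) (\<rho> i)) * transpose_mat Q
              - A0) (As j))"
  shows "xk1 = xk - the (mat_inverse (gram As l)) *\<^sub>v
           (transpose_mat (mat m l (\<lambda>(i,j). col Q i \<bullet> (As j *\<^sub>v col Q i)))
              *\<^sub>v vec m (\<lambda>i. eig (affine_mat n A0 As l xk) (\<rho> i) - lamstar i))"
proof -
  note As = assms(4)
  note Q = assms(9)
  define A where "A = affine_mat n A0 As l xk"
  define d where "d i = eig A (\<rho> i)" for i
  define e where "e i = (if i < m then lamstar i else d i)" for i
  define B where "B = gram As l"
  have df: "d = (\<lambda>i. eig A (\<rho> i))" by (simp add: d_def fun_eq_iff)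
  have ef: "e = (\<lambda>i. if i < m then lamstar i else d i)" by (simp add: e_def fun_eq_iff)
  define J where "J = mat m l (\<lambda>(i,j). col Q i \<bullet> (As j *\<^sub>v col Q i))"
  define r where "r = vec m (\<lambda>i. d i - lamstar i)"
  define Z where "Z = Q * mat_diag n e * transpose_mat Q"
  have Bc: "B \<in> carrier_mat l l" by (simp add: B_def gram_def)
  have Jc: "J \<in> carrier_mat m l" by (simp add: J_def)
  have rc: "r \<in> carrier_vec m" by (simp add: r_def)
  have hA: "A = Q * mat_diag n d * transpose_mat Q" using assms(11) unfolding df A_def by simp
  have hx: "B *\<^sub>v xk1 = vec l (\<lambda>j. frob (Z - A0) (As j))"
    using assms(13) unfolding B_def Z_def ef df A_def by simp
  have Zc: "Z \<in> carrier_mat n n" using Q unfolding Z_def by (intro mult_carrier_mat[of _ n n]) auto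
  have Aent: "A $$ (a,b) = A0 $$ (a,b) + (\<Sum>t<l. xk $ t * As t $$ (a,b))" if "a < n" "b < n" for a b
    using that by (simp add: A_def affine_mat_def)
  have Zent: "Z $$ (a,b) - A0 $$ (a,b) = (\<Sum>t<l. xk $ t * As t $$ (a,b))
      + (\<Sum>k<m. Q $$ (a,k) * (lamstar k - d k) * Q $$ (b,k))" if ab: "a < n" "b < n" for a b
  proof -
    have "Z $$ (a,b) - A $$ (a,b) = (\<Sum>k<n. Q $$ (a,k) * e k * Q $$ (b,k)) - (\<Sum>k<n. Q $$ (a,k) * d k * Q $$ (b,k))"
      unfolding Z_def hA by (simp only: QDQ_entry[OF Q ab])
    also have "\<dots> = (\<Sum>k<n. Q $$ (a,k) * (e k - d k) * Q $$ (b,k))"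
      unfolding sum_subtractf[symmetric] by (intro sum.cong refl) (simp add: algebra_simps)
    also have "\<dots> = (\<Sum>k<m. Q $$ (a,k) * (e k - d k) * Q $$ (b,k)) + (\<Sum>k\<in>{m..<n}. Q $$ (a,k) * (e k - d k) * Q $$ (b,k))"
    proof -
      have U: "{..<m} \<union> {m..<n} = {..<n}" using assms(1) by auto
      have "(\<Sum>k\<in>{..<m} \<union> {m..<n}. Q $$ (a,k) * (e k - d k) * Q $$ (b,k)) = (\<Sum>k<m. Q $$ (a,k) * (e k - d k) * Q $$ (b,k)) + (\<Sum>k\<in>{m..<n}. Q $$ (a,k) * (e k - d k) * Q $$ (b,k))"
        by (rule sum.union_disjoint) auto
      thus ?thesis by (simp only: U)
    qed
    finally have s1: "Z $$ (a,b) - A $$ (a,b) = (\<Sum>k<m. Q $$ (a,k) * (e k - d k) * Q $$ (b,k)) + (\<Sum>k\<in>{m..<n}. Q $$ (a,k) * (e k - d k) * Q $$ (b,k))" .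
    have s2: "(\<Sum>k\<in>{m..<n}. Q $$ (a,k) * (e k - d k) * Q $$ (b,k)) = 0"
      by (intro sum.neutral) (simp add: e_def)
    have s3: "(\<Sum>k<m. Q $$ (a,k) * (e k - d k) * Q $$ (b,k)) = (\<Sum>k<m. Q $$ (a,k) * (lamstar k - d k) * Q $$ (b,k))"
      by (intro sum.cong refl) (simp add: e_def)
    have "Z $$ (a,b) - A $$ (a,b) = (\<Sum>k<m. Q $$ (a,k) * (lamstar k - d k) * Q $$ (b,k))"
      using s1 s2 s3 by simp
    thus ?thesis using Aent[OF ab] by simp
  qed
  have key: "B *\<^sub>v xk1 = B *\<^sub>v xk - J\<^sup>T *\<^sub>v r"
  proof (rule eq_vecI)
    show "dim_vec (B *\<^sub>v xk1) = dim_vec (B *\<^sub>v xk - J\<^sup>T *\<^sub>v r)" using Bc Jc by simp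
  next
    fix j assume "j < dim_vec (B *\<^sub>v xk - J\<^sup>T *\<^sub>v r)"
    hence j: "j < l" using Bc Jc by simp
    have Aj: "As j \<in> carrier_mat n n" using As j by auto
    have lhs: "(B *\<^sub>v xk1) $ j = (\<Sum>a<n. \<Sum>b<n. ((\<Sum>t<l. xk $ t * As t $$ (a,b))
      + (\<Sum>k<m. Q $$ (a,k) * (lamstar k - d k) * Q $$ (b,k))) * As j $$ (a,b))"
      unfolding hx using j Zc assms(2) by (simp add: frob_def, intro sum.cong refl, simp add: Zent)
    also have "\<dots> = (\<Sum>t<l. \<Sum>a<n. \<Sum>b<n. xk $ t * As t $$ (a,b) * As j $$ (a,b))
       + (\<Sum>k<m. \<Sum>a<n. \<Sum>b<n. Q $$ (a,k) * (lamstar k - d k) * Q $$ (b,k) * As j $$ (a,b))"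
      by (simp add: distrib_right sum.distrib sum_distrib_right swap3)
    also have "(\<Sum>t<l. \<Sum>a<n. \<Sum>b<n. xk $ t * As t $$ (a,b) * As j $$ (a,b)) = (B *\<^sub>v xk) $ j"
    proof -
      have "(B *\<^sub>v xk) $ j = (\<Sum>t<l. frob (As j) (As t) * xk $ t)"
        using j assms(8) by (simp add: B_def gram_def scalar_prod_def lessThan_atLeast0)
      also have "\<dots> = (\<Sum>t<l. \<Sum>a<n. \<Sum>b<n. xk $ t * As t $$ (a,b) * As j $$ (a,b))"
        using Aj by (simp add: frob_def sum_distrib_left sum_distrib_right mult_ac)
      finally show ?thesis by simp
    qed
    also have "(\<Sum>k<m. \<Sum>a<n. \<Sum>b<n. Q $$ (a,k) * (lamstar k - d k) * Q $$ (b,k) * As j $$ (a,b))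
        = - (J\<^sup>T *\<^sub>v r) $ j"
    proof -
      have "(J\<^sup>T *\<^sub>v r) $ j = (\<Sum>k<m. (col Q k \<bullet> (As j *\<^sub>v col Q k)) * (d k - lamstar k))"
        using j rc by (simp add: J_def r_def scalar_prod_def lessThan_atLeast0)
      also have "\<dots> = (\<Sum>k<m. \<Sum>a<n. \<Sum>b<n. Q $$ (a,k) * (d k - lamstar k) * Q $$ (b,k) * As j $$ (a,b))"
      proof (rule sum.cong[OF refl])
        fix k assume "k \<in> {..<m}"
        hence k: "k < n" using assms(1) by auto
        have "col Q k \<bullet> (As j *\<^sub>v col Q k) = (\<Sum>a<n. Q $$ (a,k) * (\<Sum>b<n. As j $$ (a,b) * Q $$ (b,k)))"
          using Q Aj k by (simp add: scalar_prod_def lessThan_atLeast0)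
        thus "(col Q k \<bullet> (As j *\<^sub>v col Q k)) * (d k - lamstar k) = (\<Sum>a<n. \<Sum>b<n. Q $$ (a,k) * (d k - lamstar k) * Q $$ (b,k) * As j $$ (a,b))"
          by (simp add: sum_distrib_left sum_distrib_right mult_ac)
      qed
      finally show ?thesis
        by (simp add: sum_negf[symmetric] algebra_simps)
    qed
    finally show "(B *\<^sub>v xk1) $ j = (B *\<^sub>v xk - J\<^sup>T *\<^sub>v r) $ j"
      using j Bc Jc by simp
  qed
  obtain Bi where Bi: "mat_inverse B = Some Bi" "Bi * B = 1\<^sub>m l" "Bi \<in> carrier_mat l l"
    using gram_invertible[of l As n A0] As assms(5) unfolding B_def by blast
  have "xk1 = Bi *\<^sub>v (B *\<^sub>v xk1)"
  proof -
    have "Bi *\<^sub>v (B *\<^sub>v xk1) = (Bi * B) *\<^sub>v xk1" using Bi(3) Bc assms(12) by simp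
    thus ?thesis using Bi(2) assms(12) by simp
  qed
  also have "\<dots> = Bi *\<^sub>v (B *\<^sub>v xk) - Bi *\<^sub>v (J\<^sup>T *\<^sub>v r)"
    unfolding key using Bi(3) Bc Jc rc assms(8) by (simp add: mult_minus_distrib_mat_vec)
  also have "Bi *\<^sub>v (B *\<^sub>v xk) = xk"
  proof -
    have "Bi *\<^sub>v (B *\<^sub>v xk) = (Bi * B) *\<^sub>v xk" using Bi(3) Bc assms(8) by simp
    thus ?thesis using Bi(2) assms(8) by simp
  qed
  finally show ?thesis using Bi(1) unfolding B_def J_def r_def df A_def by simp
qed

end
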